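(* Let $p$ be a prime, $n\geq 2$, $T=Tr(\mathbb{Z}_{p^n})$ and $G=\Gamma(T)$. Let $X$ be the set of nonzero zero-divisors of $\mathbb{Z}_{p^n}$ (i.e. the nonzero multiples of $p$), and let $$A_4^*=\left\{\begin{pmatrix}m+z&0\\0&z\end{pmatrix}\middle| m\in X,z\in\mathbb{Z}_{p^n}\right\},\ A_5^*=\left\{\begin{pmatrix}z&m\\0&z\end{pmatrix}\middle| m\in X,z\in\mathbb{Z}_{p^n}\right\},\ A_6^*=\left\{\begin{pmatrix}m_1+z&m_2\\0&z\end{pmatrix}\middle| m_1,m_2\in X,z\in\mathbb{Z}_{p^n}\right\},$$ and for a set $A^*$ of vertices write $d(A^* )=\sum_{B\in A^*}d(B)$. Then (i) $d(A_4^* )=d(A_5^* )=(p-1)\,p^{2n-1}\sum_{r=1}^{n-1}\left(p^{2n}-p^{n-r}-p^{-r}\right)$; (ii) $d(A_6^* )=2\alpha-\beta$, where $$\alpha=(p-1)\,p^{2n-1}\sum_{r=1}^{n-1}\Big((p^{3n}+p^n+1)p^{-r}-(p^{2n}+p^n)p^{-2r}-p^{2n}\Big),$$ $$\beta=(p-1)^2\sum_{r=1}^{n-1}p^{3n-2r-2}\left(p^{2n+r}-p^n-1\right).$$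
   Context: For a ring $S$ with identity whose center $Z(S)$ is not all of $S$, the commuting graph $\Gamma(S)$ is the simple graph with vertex set $S\setminus Z(S)$, in which two distinct vertices $a,b$ are adjacent iff $ab=ba$; $d(B)$ is the degree of vertex $B$. $Tr(R)$ denotes the ring of all $2\times 2$ upper triangular matrices over $R$. *)

theory Defs
  imports "HOL-Number_Theory.Residues"
begin

text \<open>Ring of 2x2 upper triangular matrices [[a,b],[0,c]] over R, encoded as triples (a,b,c).\<close>
definition Tr :: "('a, 'm) ring_scheme \<Rightarrow> ('a \<times> 'a \<times> 'a) ring" where
  "Tr R = \<lparr>carrier = carrier R \<times> carrier R \<times> carrier R,
     monoid.mult = (\<lambda>(a, b, c) (a', b', c').
        (a \<otimes>\<^bsub>R\<^esub> a', (a \<otimes>\<^bsub>R\<^esub> b') \<oplus>\<^bsub>R\<^esub> (b \<otimes>\<^bsub>R\<^esub> c'), c \<otimes>\<^bsub>R\<^esub> c')),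
     one = (\<one>\<^bsub>R\<^esub>, \<zero>\<^bsub>R\<^esub>, \<one>\<^bsub>R\<^esub>),
     zero = (\<zero>\<^bsub>R\<^esub>, \<zero>\<^bsub>R\<^esub>, \<zero>\<^bsub>R\<^esub>),
     add = (\<lambda>(a, b, c) (a', b', c'). (a \<oplus>\<^bsub>R\<^esub> a', b \<oplus>\<^bsub>R\<^esub> b', c \<oplus>\<^bsub>R\<^esub> c'))\<rparr>"

definition ring_center :: "('a, 'm) ring_scheme \<Rightarrow> 'a set" where
  "ring_center S = {x \<in> carrier S. \<forall>y \<in> carrier S. x \<otimes>\<^bsub>S\<^esub> y = y \<otimes>\<^bsub>S\<^esub> x}"

definition cg_vertices :: "('a, 'm) ring_scheme \<Rightarrow> 'a set" where
  "cg_vertices S = carrier S - ring_center S"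

definition cg_degree :: "('a, 'm) ring_scheme \<Rightarrow> 'a \<Rightarrow> nat" where
  "cg_degree S B = card {C \<in> cg_vertices S. C \<noteq> B \<and> B \<otimes>\<^bsub>S\<^esub> C = C \<otimes>\<^bsub>S\<^esub> B}"

definition nz_zero_divisors :: "('a, 'm) ring_scheme \<Rightarrow> 'a set" where
  "nz_zero_divisors R = {m \<in> carrier R. m \<noteq> \<zero>\<^bsub>R\<^esub> \<and>
      (\<exists>y \<in> carrier R. y \<noteq> \<zero>\<^bsub>R\<^esub> \<and> m \<otimes>\<^bsub>R\<^esub> y = \<zero>\<^bsub>R\<^esub>)}"

end

theory Submission
  imports Defs
begin


lemma count_mod:
  fixes d M r :: int
  assumes "d > 0" "M > 0" "0 \<le> r" "r < M"
  shows "card {y\<in>{0..<d*M}. y mod M = r} = nat d"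
proof -
  have "{y\<in>{0..<d*M}. y mod M = r} = (\<lambda>k. r + k*M) ` {0..<d}"
  proof (rule Set.set_eqI, rule iffI)
    fix y assume y: "y \<in> {y\<in>{0..<d*M}. y mod M = r}"
    have "y mod M = r" using y by simp
    hence "y = r + (y div M) * M" using div_mult_mod_eq[of y M] by linarith
    moreover have "0 \<le> y div M" using y assms by (simp add: pos_imp_zdiv_nonneg_iff)
    moreover have "y div M < d"
    proof -
      have "y div M * M < d * M" using div_mult_mod_eq[of y M] y assms by (simp only: mem_Collect_eq atLeastLessThan_iff) linarith
      thus ?thesis using assms by (meson mult_right_less_imp_less less_imp_le)
    qed
    ultimately show "y \<in> (\<lambda>k. r + k*M) ` {0..<d}" by (intro image_eqI[of _ _ "y div M"]) auto
  next
    fix y assume "y \<in> (\<lambda>k. r + k*M) ` {0..<d}"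
    then obtain k where k: "0 \<le> k" "k < d" "y = r + k*M" by auto
    have "k * M \<le> (d - 1) * M" using k assms by (intro mult_right_mono) auto
    hence "y < d * M" using k assms by (simp add: algebra_simps)
    moreover have "y mod M = r" using k assms by simp
    ultimately show "y \<in> {y\<in>{0..<d*M}. y mod M = r}" using k assms by auto
  qed
  moreover have "inj_on (\<lambda>k. r + k*M) {0..<d}" using assms by (auto simp: inj_on_def)
  ultimately show ?thesis by (simp add: card_image)
qed

lemma count_cong:
  fixes N t c :: int
  assumes N: "N > 0"
  shows "card {y\<in>{0..<N}. N dvd (t*y - c)} = (if gcd t N dvd c then nat (gcd t N) else 0)"
proof (cases "gcd t N dvd c")
  case False
  have "{y\<in>{0..<N}. N dvd (t*y - c)} = {}"
  proof (rule ccontr)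
    assume "{y\<in>{0..<N}. N dvd (t*y - c)} \<noteq> {}"
    then obtain y where "N dvd (t*y - c)" by auto
    hence "gcd t N dvd (t*y - c)" by (meson dvd_trans gcd_dvd2)
    moreover have "gcd t N dvd t*y" by simp
    ultimately have "gcd t N dvd (t*y - (t*y - c))" by (metis dvd_diff)
    hence "gcd t N dvd c" by simp
    with False show False by simp
  qed
  with False show ?thesis by (simp only: card.empty if_False)
next
  case True
  define d where "d = gcd t N"
  have d0: "d > 0" using N by (simp add: d_def)
  obtain t' where t': "t = d * t'" by (metis d_def gcd_dvd1 dvdE)
  obtain M where M: "N = d * M" by (metis d_def gcd_dvd2 dvdE)
  obtain c' where c': "c = d * c'" using True d_def by (metis dvdE)
  have M0: "M > 0" using N d0 M by (simp add: zero_less_mult_iff)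
  have cop: "coprime t' M"
  proof -
    have "gcd t N = d * gcd t' M" using t' M d0 by (simp add: gcd_mult_left abs_of_pos)
    hence "d * gcd t' M = d * 1" using d_def by simp
    hence "gcd t' M = 1" using d0 by (simp only: mult_left_cancel)
    thus ?thesis by (simp add: coprime_iff_gcd_eq_1)
  qed
  obtain w where w: "[t' * w = 1] (mod M)" using cong_solve_coprime_int[OF cop] by blast
  define r where "r = (w * c') mod M"
  have eq: "N dvd (t*y - c) \<longleftrightarrow> y mod M = r" for y
  proof -
    have "t*y - c = d * (t'*y - c')" using t' c' by (simp add: algebra_simps)
    hence "N dvd (t*y - c) \<longleftrightarrow> M dvd (t'*y - c')"
      using M d0 by (simp add: mult_dvd_mono)
    also have "\<dots> \<longleftrightarrow> [t'*y = c'] (mod M)" by (simp add: cong_iff_dvd_diff)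
    also have "\<dots> \<longleftrightarrow> [y = w*c'] (mod M)"
    proof
      assume h: "[t'*y = c'] (mod M)"
      have "[w*(t'*y) = w*c'] (mod M)" using h by (simp add: cong_scalar_left)
      moreover have "[w*(t'*y) = y] (mod M)"
        using cong_scalar_right[OF w, of y] by (simp add: ac_simps)
      ultimately show "[y = w*c'] (mod M)" by (metis cong_sym cong_trans)
    next
      assume h: "[y = w*c'] (mod M)"
      have "[t'*y = t'*(w*c')] (mod M)" using h by (simp add: cong_scalar_left)
      moreover have "[t'*(w*c') = c'] (mod M)"
        using cong_scalar_right[OF w, of c'] by (simp add: ac_simps)
      ultimately show "[t'*y = c'] (mod M)" by (metis cong_trans)
    qed
    also have "\<dots> \<longleftrightarrow> y mod M = r" by (simp add: r_def cong_def)
    finally show ?thesis .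
  qed
  have "{y\<in>{0..<N}. N dvd (t*y - c)} = {y\<in>{0..<d*M}. y mod M = r}" using eq M by auto
  also have "card \<dots> = nat d" using count_mod[OF d0 M0, of r] M0 by (simp add: r_def)
  finally show ?thesis using True d_def by simp
qed

lemma count_dvd:
  fixes N e :: int
  assumes "N > 0" "e > 0" "e dvd N"
  shows "card {x\<in>{0..<N}. e dvd x} = nat (N div e)"
proof -
  have "N = (N div e) * e" using assms by simp
  moreover have "N div e > 0" using assms by (simp add: pos_imp_zdiv_pos_iff zdvd_imp_le)
  ultimately have "card {x\<in>{0..<(N div e) * e}. x mod e = 0} = nat (N div e)"
    using count_mod[of "N div e" e 0] assms by simp
  moreover have "{x\<in>{0..<N}. e dvd x} = {x\<in>{0..<(N div e) * e}. x mod e = 0}"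
    using \<open>N = (N div e) * e\<close> by (auto simp: dvd_eq_mod_eq_0)
  ultimately show ?thesis by simp
qed

lemma kernel2:
  fixes N s t :: int
  assumes N: "N > 0"
  shows "card {(x,y). x\<in>{0..<N} \<and> y\<in>{0..<N} \<and> N dvd (s*x + t*y)} = nat (N * gcd (gcd s t) N)"
proof -
  define d where "d = gcd t N"
  have d0: "d > 0" using N by (simp add: d_def)
  define g where "g = gcd s d"
  have g0: "g > 0" using d0 by (simp add: g_def)
  obtain e where e: "d = g * e" by (metis g_def gcd_dvd2 dvdE)
  obtain s' where s': "s = g * s'" by (metis g_def gcd_dvd1 dvdE)
  have e0: "e > 0" using d0 g0 e by (simp add: zero_less_mult_iff)
  have cop: "coprime s' e"
  proof -
    have "gcd s d = g * gcd s' e" using s' e g0 by (simp add: gcd_mult_left abs_of_pos)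
    hence "g * gcd s' e = g * 1" using g_def by simp
    hence "gcd s' e = 1" using g0 by (simp only: mult_left_cancel)
    thus ?thesis by (simp add: coprime_iff_gcd_eq_1)
  qed
  have dvdiff: "d dvd s*x \<longleftrightarrow> e dvd x" for x
  proof -
    have "d dvd s*x \<longleftrightarrow> e dvd s'*x" using e s' g0 by (simp add: mult.assoc)
    also have "\<dots> \<longleftrightarrow> e dvd x" using cop by (simp add: coprime_dvd_mult_right_iff coprime_commute)
    finally show ?thesis .
  qed
  have edvd: "e dvd N" using e d_def by (metis dvd_mult_right gcd_dvd2)
  have "{(x,y). x\<in>{0..<N} \<and> y\<in>{0..<N} \<and> N dvd (s*x + t*y)}
        = Sigma {0..<N} (\<lambda>x. {y\<in>{0..<N}. N dvd (t*y - (-s*x))})" by (auto simp: add.commute)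
  moreover have "card (Sigma {0..<N} (\<lambda>x. {y\<in>{0..<N}. N dvd (t*y - (-s*x))}))
        = (\<Sum>x\<in>{0..<N}. card {y\<in>{0..<N}. N dvd (t*y - (-s*x))})"
    apply (rule card_SigmaI)
     apply (rule finite_atLeastLessThan_int)
    apply (intro ballI finite_subset[OF _ finite_atLeastLessThan_int[of 0 N]])
    apply blast
    done
  ultimately have "card {(x,y). x\<in>{0..<N} \<and> y\<in>{0..<N} \<and> N dvd (s*x + t*y)}
        = (\<Sum>x\<in>{0..<N}. card {y\<in>{0..<N}. N dvd (t*y - (-s*x))})" by simp
  also have "\<dots> = (\<Sum>x\<in>{0..<N}. if e dvd x then nat d else 0)"
  proof (rule sum.cong[OF refl])
    fix x show "card {y\<in>{0..<N}. N dvd (t*y - (-s*x))} = (if e dvd x then nat d else 0)"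
      using count_cong[OF N, of t "-s*x"] dvdiff[of x] by (simp add: d_def)
  qed
  also have "\<dots> = nat d * card {x\<in>{0..<N}. e dvd x}"
    by (simp add: sum.If_cases Int_def conj_commute)
  also have "\<dots> = nat d * nat (N div e)" using count_dvd[OF N e0 edvd] by simp
  also have "\<dots> = nat (N * g)"
  proof -
    have "d * (N div e) = N * g" using e edvd e0 by (metis dvd_div_mult_self mult.commute mult.left_commute nonzero_mult_div_cancel_left less_irrefl)
    thus ?thesis by (metis nat_mult_distrib d0 less_imp_le)
  qed
  also have "g = gcd (gcd s t) N" by (simp add: g_def d_def gcd.assoc)
  finally show ?thesis .
qed

lemma Tr_carrier: "carrier (Tr (residue_ring N)) = {0..<N} \<times> {0..<N} \<times> {0..<N}"
  by (auto simp: Tr_def residue_ring_def)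

lemma Tr_mult: "(a,b,c) \<otimes>\<^bsub>Tr (residue_ring N)\<^esub> (a',b',c')
   = (a*a' mod N, (a*b' mod N + b*c' mod N) mod N, c*c' mod N)"
  by (simp add: Tr_def residue_ring_def)

lemma comm_iff:
  "((a,b,c) \<otimes>\<^bsub>Tr (residue_ring N)\<^esub> (a',b',c') = (a',b',c') \<otimes>\<^bsub>Tr (residue_ring N)\<^esub> (a,b,c))
   \<longleftrightarrow> N dvd ((a-c)*b' - b*(a'-c'))"
proof -
  have "((a,b,c) \<otimes>\<^bsub>Tr (residue_ring N)\<^esub> (a',b',c') = (a',b',c') \<otimes>\<^bsub>Tr (residue_ring N)\<^esub> (a,b,c))
     \<longleftrightarrow> (a*b' + b*c') mod N = (a'*b + b'*c) mod N"
    by (simp add: Tr_mult mod_add_eq ac_simps)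
  also have "\<dots> \<longleftrightarrow> N dvd ((a*b' + b*c') - (a'*b + b'*c))" by (rule mod_eq_dvd_iff)
  also have "(a*b' + b*c') - (a'*b + b'*c) = (a-c)*b' - b*(a'-c')" by (simp add: algebra_simps)
  finally show ?thesis .
qed

lemma range_dvd_eq:
  fixes x y N :: int
  assumes "0 \<le> x" "x < N" "0 \<le> y" "y < N" "N dvd (x - y)"
  shows "x = y"
proof -
  have "x mod N = y mod N" using assms(5) by (simp add: mod_eq_dvd_iff)
  thus ?thesis using assms by simp
qed

lemma dvd_shift:
  fixes N U b V W :: int
  assumes "N dvd (V - W)"
  shows "N dvd (U - b*V) \<longleftrightarrow> N dvd (U - b*W)"
proof -
  have "(U - b*W) = (U - b*V) + b*(V - W)" by (simp add: algebra_simps)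
  moreover have "N dvd b*(V - W)" using assms by simp
  ultimately show ?thesis by (metis dvd_add_left_iff dvd_add_right_iff)
qed

lemma center_Tr:
  fixes N :: int
  assumes N: "N > 1"
  shows "ring_center (Tr (residue_ring N)) = (\<lambda>z. (z,0,z)) ` {0..<N}"
proof (rule Set.set_eqI, rule iffI)
  fix X assume X: "X \<in> ring_center (Tr (residue_ring N))"
  obtain a b c where abc: "X = (a,b,c)" by (cases X) auto
  have inr: "0 \<le> a" "a < N" "0 \<le> b" "b < N" "0 \<le> c" "c < N"
    using X abc by (auto simp: ring_center_def Tr_carrier)
  have c1: "(1::int,0::int,0::int) \<in> carrier (Tr (residue_ring N))" "(0::int,1::int,0::int) \<in> carrier (Tr (residue_ring N))"
    using N by (auto simp: Tr_carrier)
  have "N dvd ((a-c)*0 - b*(1-0))"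
    using X abc c1(1) unfolding ring_center_def comm_iff[symmetric] by auto
  hence "N dvd (b - 0)" by simp
  hence b0: "b = 0" using inr range_dvd_eq[of b N 0] N by simp
  have "N dvd ((a-c)*1 - b*(0-0))"
    using X abc c1(2) unfolding ring_center_def comm_iff[symmetric] by auto
  hence "a = c" using inr range_dvd_eq[of a N c] by simp
  thus "X \<in> (\<lambda>z. (z,0,z)) ` {0..<N}" using abc b0 inr by auto
next
  fix X assume "X \<in> (\<lambda>z. (z,0::int,z)) ` {0..<N}"
  then obtain z where z: "X = (z,0,z)" "0 \<le> z" "z < N" by auto
  show "X \<in> ring_center (Tr (residue_ring N))"
    unfolding ring_center_def
  proof (intro CollectI conjI ballI)
    show "X \<in> carrier (Tr (residue_ring N))" using z by (simp add: Tr_carrier)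
    fix Y assume "Y \<in> carrier (Tr (residue_ring N))"
    obtain a' b' c' where "Y = (a',b',c')" by (cases Y) auto
    thus "X \<otimes>\<^bsub>Tr (residue_ring N)\<^esub> Y = Y \<otimes>\<^bsub>Tr (residue_ring N)\<^esub> X"
      using z by (simp only: comm_iff) simp
  qed
qed

lemma card_comm:
  fixes N a b c :: int
  assumes N: "N > 0"
  shows "int (card {C \<in> carrier (Tr (residue_ring N)).
            (a,b,c) \<otimes>\<^bsub>Tr (residue_ring N)\<^esub> C = C \<otimes>\<^bsub>Tr (residue_ring N)\<^esub> (a,b,c)})
         = N * N * gcd (gcd (a-c) b) N"
proof -
  define T where "T = Tr (residue_ring N)"
  define K where "K = {(x,y). x\<in>{0..<N} \<and> y\<in>{0..<N} \<and> N dvd ((-b)*x + (a-c)*y)}"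
  define f where "f = (\<lambda>((x::int,y::int),c'::int). ((x+c') mod N, y, c'))"
  have condC: "(a,b,c) \<otimes>\<^bsub>T\<^esub> (a',b',c') = (a',b',c') \<otimes>\<^bsub>T\<^esub> (a,b,c)
      \<longleftrightarrow> N dvd ((-b)*((a'-c') mod N) + (a-c)*b')" for a' b' c'
  proof -
    have "N dvd ((a'-c') - (a'-c') mod N)" by (simp add: mod_eq_dvd_iff[symmetric])
    hence "N dvd ((a-c)*b' - b*(a'-c')) \<longleftrightarrow> N dvd ((a-c)*b' - b*((a'-c') mod N))"
      by (rule dvd_shift)
    thus ?thesis unfolding T_def comm_iff by (simp add: algebra_simps)
  qed
  have "{C \<in> carrier T. (a,b,c) \<otimes>\<^bsub>T\<^esub> C = C \<otimes>\<^bsub>T\<^esub> (a,b,c)} = f ` (K \<times> {0..<N})"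
  proof (rule Set.set_eqI, rule iffI)
    fix C assume C: "C \<in> {C \<in> carrier T. (a,b,c) \<otimes>\<^bsub>T\<^esub> C = C \<otimes>\<^bsub>T\<^esub> (a,b,c)}"
    obtain a' b' c' where abc: "C = (a',b',c')" by (cases C) auto
    have inr: "0 \<le> a'" "a' < N" "0 \<le> b'" "b' < N" "0 \<le> c'" "c' < N"
      using C abc by (auto simp: T_def Tr_carrier)
    have "N dvd ((-b)*((a'-c') mod N) + (a-c)*b')" using C abc condC by auto
    hence "((a'-c') mod N, b') \<in> K" using inr N by (simp add: K_def)
    moreover have "f (((a'-c') mod N, b'), c') = C"
      using inr abc by (simp add: f_def mod_add_left_eq)
    ultimately show "C \<in> f ` (K \<times> {0..<N})" using inr by force
  next
    fix C assume "C \<in> f ` (K \<times> {0..<N})"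
    then obtain x y c' where xy: "(x,y) \<in> K" "0 \<le> c'" "c' < N" "C = ((x+c') mod N, y, c')"
      by (auto simp: f_def)
    have xr: "0 \<le> x" "x < N" "0 \<le> y" "y < N" using xy(1) by (auto simp: K_def)
    have "((x+c') mod N - c') mod N = x" using xr by (simp add: mod_diff_left_eq)
    hence "N dvd ((-b)*(((x+c') mod N - c') mod N) + (a-c)*y)" using xy(1) by (simp add: K_def)
    hence "(a,b,c) \<otimes>\<^bsub>T\<^esub> C = C \<otimes>\<^bsub>T\<^esub> (a,b,c)" using xy(4) condC by simp
    moreover have "C \<in> carrier T" using xy xr N by (simp add: T_def Tr_carrier)
    ultimately show "C \<in> {C \<in> carrier T. (a,b,c) \<otimes>\<^bsub>T\<^esub> C = C \<otimes>\<^bsub>T\<^esub> (a,b,c)}" by simp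
  qed
  moreover have "inj_on f (K \<times> {0..<N})"
  proof (rule inj_onI)
    fix u v assume u: "u \<in> K \<times> {0..<N}" and v: "v \<in> K \<times> {0..<N}" and e: "f u = f v"
    obtain x y c' x2 y2 c2 where uv: "u = ((x,y),c')" "v = ((x2,y2),c2)" by (metis prod.exhaust)
    have r: "0 \<le> x" "x < N" "0 \<le> x2" "x2 < N" using u v uv by (auto simp: K_def)
    have eq: "y = y2" "c' = c2" "(x+c') mod N = (x2+c2) mod N" using e uv by (auto simp: f_def)
    hence "N dvd ((x + c') - (x2 + c'))" by (simp add: mod_eq_dvd_iff)
    hence "x = x2" using r range_dvd_eq[of x N x2] by simp
    thus "u = v" using uv eq by simp
  qed
  ultimately have "card {C \<in> carrier T. (a,b,c) \<otimes>\<^bsub>T\<^esub> C = C \<otimes>\<^bsub>T\<^esub> (a,b,c)} = card K * card {0..<N}"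
    by (simp add: card_image card_cartesian_product)
  moreover have "card K = nat (N * gcd (gcd (-b) (a-c)) N)"
    unfolding K_def by (rule kernel2[OF N])
  ultimately show ?thesis using N by (simp add: T_def gcd.commute)
qed

lemma degree:
  fixes N a b c :: int
  assumes N: "N > 1" and r: "0 \<le> a" "a < N" "0 \<le> b" "b < N" "0 \<le> c" "c < N"
    and nc: "\<not> (b = 0 \<and> a = c)"
  shows "int (cg_degree (Tr (residue_ring N)) (a,b,c)) = N * N * gcd (gcd (a-c) b) N - N - 1"
proof -
  define T where "T = Tr (residue_ring N)"
  define S where "S = {C \<in> carrier T. (a,b,c) \<otimes>\<^bsub>T\<^esub> C = C \<otimes>\<^bsub>T\<^esub> (a,b,c)}"
  define Z where "Z = ring_center T"
  have Zeq: "Z = (\<lambda>z. (z,0,z)) ` {0..<N}" using center_Tr[OF N] by (simp add: Z_def T_def)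
  have finS: "finite S"
  proof -
    have "S \<subseteq> {0..<N} \<times> {0..<N} \<times> {0..<N}" by (auto simp: S_def T_def Tr_carrier)
    thus ?thesis by (rule finite_subset) simp
  qed
  have ZS: "Z \<subseteq> S"
  proof
    fix X assume X: "X \<in> Z"
    have "(a,b,c) \<in> carrier T" using r by (simp add: T_def Tr_carrier)
    thus "X \<in> S" using X unfolding Z_def ring_center_def S_def by auto
  qed
  have BS: "(a,b,c) \<in> S" using r by (simp add: S_def T_def Tr_carrier)
  have BZ: "(a,b,c) \<notin> Z" using nc Zeq by auto
  have cardZ: "card Z = nat N"
    using Zeq by (simp add: card_image inj_on_def)
  have "{C \<in> cg_vertices T. C \<noteq> (a,b,c) \<and> (a,b,c) \<otimes>\<^bsub>T\<^esub> C = C \<otimes>\<^bsub>T\<^esub> (a,b,c)} = (S - Z) - {(a,b,c)}"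
    by (auto simp: cg_vertices_def S_def Z_def)
  hence "cg_degree T (a,b,c) = card ((S - Z) - {(a,b,c)})" by (simp add: cg_degree_def)
  also have "\<dots> = card (S - Z) - 1" using BS BZ finS by (simp add: card_Diff_singleton)
  also have "\<dots> = card S - card Z - 1" using ZS finS by (simp add: card_Diff_subset finite_subset)
  finally have deg: "cg_degree T (a,b,c) = card S - card Z - 1" .
  have "card Z + 1 \<le> card S"
  proof -
    have "Z \<subset> S" using ZS BS BZ by auto
    hence "card Z < card S" using finS by (rule psubset_card_mono[rotated])
    thus ?thesis by simp
  qed
  hence "int (cg_degree T (a,b,c)) = int (card S) - int (card Z) - 1" using deg by simp
  moreover have "int (card S) = N * N * gcd (gcd (a-c) b) N"
    unfolding S_def T_def using card_comm[of N a b c] N by simp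
  ultimately show ?thesis using cardZ N by (simp add: T_def)
qed

lemma X_char:
  fixes p :: int
  assumes p: "prime p" and n: "n \<ge> 1"
  shows "nz_zero_divisors (residue_ring (p^n)) = {m. 1 \<le> m \<and> m < p^n \<and> p dvd m}"
proof (rule Set.set_eqI, rule iffI)
  have p1: "p > 1" using p by (simp add: prime_gt_1_int)
  fix m assume m: "m \<in> nz_zero_divisors (residue_ring (p^n))"
  then obtain y where y: "0 \<le> y" "y < p^n" "y \<noteq> 0" "(m*y) mod p^n = 0" and mr: "0 \<le> m" "m < p^n" "m \<noteq> 0"
    by (auto simp: nz_zero_divisors_def residue_ring_def)
  have "p dvd m"
  proof (rule ccontr)
    assume "\<not> p dvd m"
    hence "coprime p m" using p by (simp add: prime_imp_coprime)
    hence "coprime (p^n) m" by simp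
    moreover have "p^n dvd m*y" using y by (simp add: mod_eq_0_iff_dvd)
    ultimately have "p^n dvd y" by (simp add: coprime_dvd_mult_right_iff)
    hence "p^n \<le> y" using y by (simp add: zdvd_imp_le)
    with y show False by simp
  qed
  thus "m \<in> {m. 1 \<le> m \<and> m < p^n \<and> p dvd m}" using mr by auto
next
  have p1: "p > 1" using p by (simp add: prime_gt_1_int)
  fix m assume "m \<in> {m. 1 \<le> m \<and> m < p^n \<and> p dvd m}"
  hence m: "1 \<le> m" "m < p^n" "p dvd m" by auto
  then obtain k where k: "m = p * k" by (auto elim: dvdE)
  define y where "y = p^(n-1)"
  have y0: "y > 0" using p1 by (simp add: y_def)
  have "y < p^n" using p1 n unfolding y_def by (simp add: power_strict_increasing)
  moreover have "(m*y) mod p^n = 0"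
  proof -
    have "m * y = k * p^n" using k n by (simp add: y_def power_eq_if mult_ac split: if_splits)
    thus ?thesis by simp
  qed
  ultimately show "m \<in> nz_zero_divisors (residue_ring (p^n))"
    using m y0 by (auto simp: nz_zero_divisors_def residue_ring_def intro!: bexI[of _ y])
qed

definition Xr :: "int \<Rightarrow> nat \<Rightarrow> nat \<Rightarrow> int set" where
  "Xr p n r = {m. 1 \<le> m \<and> m < p^n \<and> p^r dvd m \<and> \<not> p^(Suc r) dvd m}"

lemma gcd_Xr:
  fixes p :: int
  assumes p: "prime p" and r: "r < n" and m: "m \<in> Xr p n r"
  shows "gcd m (p^n) = p^r"
proof -
  obtain k where k: "m = p^r * k" using m by (auto simp: Xr_def elim: dvdE)
  have "\<not> p dvd k" using m k by (auto simp: Xr_def)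
  hence "coprime p k" using p by (simp add: prime_imp_coprime)
  hence "coprime k p" by (simp add: coprime_commute)
  hence cop: "coprime k (p^(n-r))" by simp
  have "p^n = p^r * p^(n-r)" using r by (simp add: power_add[symmetric])
  hence "gcd m (p^n) = p^r * gcd k (p^(n-r))"
    using k p by (simp add: gcd_mult_left abs_of_nonneg prime_ge_0_int)
  also have "gcd k (p^(n-r)) = 1" using cop by simp
  finally show ?thesis by simp
qed

lemma X_union:
  fixes p :: int
  assumes p: "prime p"
  shows "{m. 1 \<le> m \<and> m < p^n \<and> p dvd m} = (\<Union>r\<in>{1..n-1}. Xr p n r)"
proof (rule Set.set_eqI, rule iffI)
  have p1: "p > 1" using p by (simp add: prime_gt_1_int)
  fix m assume "m \<in> {m. 1 \<le> m \<and> m < p^n \<and> p dvd m}"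
  hence m: "1 \<le> m" "m < p^n" "p dvd m" by auto
  define r where "r = multiplicity p m"
  have nu: "\<not> is_unit p" using p not_prime_unit by blast
  have m0: "m \<noteq> 0" using m by simp
  have d1: "p^r dvd m" by (simp add: r_def multiplicity_dvd)
  have d2: "\<not> p^(Suc r) dvd m" using power_dvd_iff_le_multiplicity[OF m0 nu, of "Suc r"] by (simp add: r_def)
  have r1: "r \<ge> 1" using power_dvd_iff_le_multiplicity[OF m0 nu, of 1] m by (simp add: r_def)
  have "p^r \<le> m" using d1 m by (simp add: zdvd_imp_le)
  hence "p^r < p^n" using m by simp
  hence "r < n" using p1 by (simp add: power_strict_increasing_iff)
  thus "m \<in> (\<Union>r\<in>{1..n-1}. Xr p n r)" using r1 d1 d2 m by (auto simp: Xr_def intro!: bexI[of _ r])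
next
  fix m assume "m \<in> (\<Union>r\<in>{1..n-1}. Xr p n r)"
  then obtain r where r: "r \<ge> 1" "m \<in> Xr p n r" by auto
  have "p dvd p^r" using r by (simp add: dvd_power)
  thus "m \<in> {m. 1 \<le> m \<and> m < p^n \<and> p dvd m}" using r by (auto simp: Xr_def intro: dvd_trans)
qed

lemma card_Xr:
  fixes p :: int
  assumes p: "prime p" and r: "r < n"
  shows "int (card (Xr p n r)) = p^(n-r) - p^(n-r-1)"
proof -
  have p1: "p > 1" using p by (simp add: prime_gt_1_int)
  define D where "D = (\<lambda>s. {x\<in>{0..<p^n}. p^s dvd x})"
  have cD: "int (card (D s)) = p^(n-s)" if "s \<le> n" for s
  proof -
    have "p^n = p^s * p^(n-s)" using that by (simp add: power_add[symmetric])
    hence "p^s dvd p^n" "p^n div p^s = p^(n-s)" using p1 by auto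
    thus ?thesis unfolding D_def using count_dvd[of "p^n" "p^s"] p1 by simp
  qed
  have "Xr p n r = D r - D (Suc r)"
  proof (rule Set.set_eqI, rule iffI)
    fix x assume "x \<in> Xr p n r" thus "x \<in> D r - D (Suc r)" by (auto simp: Xr_def D_def)
  next
    fix x assume x: "x \<in> D r - D (Suc r)"
    hence "x \<noteq> 0" by (auto simp: D_def)
    thus "x \<in> Xr p n r" using x by (auto simp: Xr_def D_def)
  qed
  moreover have "D (Suc r) \<subseteq> D r" unfolding D_def by (auto intro: dvd_trans[rotated] simp: power_Suc)
  moreover have "finite (D r)" unfolding D_def by (rule finite_subset[OF _ finite_atLeastLessThan_int]) blast
  ultimately have "card (Xr p n r) = card (D r) - card (D (Suc r))" by (simp add: card_Diff_subset finite_subset)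
  moreover have "card (D (Suc r)) \<le> card (D r)" using \<open>D (Suc r) \<subseteq> D r\<close> \<open>finite (D r)\<close> by (rule card_mono[rotated])
  ultimately have "int (card (Xr p n r)) = int (card (D r)) - int (card (D (Suc r)))" by simp
  also have "\<dots> = p^(n-r) - p^(n - Suc r)" using cD r by simp
  finally show ?thesis by simp
qed


lemma pw:
  fixes P :: real
  assumes n: "n = i + 1 + k"
  shows "P^(n-i) = P * P^k" "P^(n-i-1) = P^k" "P^n = P^i * P * P^k"
    "P^(2*n-1) = P^i * P^i * P^k * P^k * P" "P^(2*n) = (P^i * P * P^k) * (P^i * P * P^k)"
    "P^(3*n) = (P^i * P * P^k) * (P^i * P * P^k) * (P^i * P * P^k)" "P^(2*i) = P^i * P^i"
    "P^(3*n - 2*i - 2) = P^i * P^k * P^k * P^k * P" "P^(2*n+i) = P^i * P^i * P^i * P^k * P^k * P * P"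
proof -
  have e: "n - i = Suc k" "Suc k - 1 = k" "(i+1+k)+(i+1+k) - 1 = i + i + k + k + 1" "2*n = (i+1+k)+(i+1+k)"
     "3*n = (i+1+k)+(i+1+k)+(i+1+k)" "2*i = i+i" "(i+1+k)+(i+1+k)+(i+1+k) - (i+i) - 2 = i+k+k+k+1" "2*n+i = i+i+i+k+k+1+1"
    using n by auto
  show "P^(n-i) = P * P^k" "P^(n-i-1) = P^k"
    "P^(2*n-1) = P^i * P^i * P^k * P^k * P" "P^(2*n) = (P^i * P * P^k) * (P^i * P * P^k)"
    "P^(3*n) = (P^i * P * P^k) * (P^i * P * P^k) * (P^i * P * P^k)" "P^(2*i) = P^i * P^i"
    "P^(3*n - 2*i - 2) = P^i * P^k * P^k * P^k * P" "P^(2*n+i) = P^i * P^i * P^i * P^k * P^k * P * P"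
    unfolding e by (simp_all only: power_add power_one_right power_Suc mult_ac)
  show "P^n = P^i * P * P^k" by (simp only: n power_add power_one_right mult_ac)
qed

lemma t1:
  fixes P :: real
  assumes P: "P \<noteq> 0" and n: "n = i + 1 + k"
  shows "(P^(n-i) - P^(n-i-1)) * (P^n*(P^n*P^n*P^i - P^n - 1))
       = (P-1)*P^(2*n-1)*(P^(2*n) - P^(n-i) - 1/P^i)"
  unfolding pw[OF n] using P by (simp add: field_simps)

lemma t2:
  fixes P :: real
  assumes P: "P \<noteq> 0" and n: "n = i + 1 + k"
  shows "(P^(n-i) - P^(n-i-1)) * (P^n*(P^n*P^n*P^i - P^n - 1)) * (P^(n-i) - 1)
       = (P-1)*P^(2*n-1)*((P^(3*n) + P^n + 1) / P^i - (P^(2*n) + P^n) / P^(2*i) - P^(2*n))"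
  unfolding pw[OF n] using P by (simp add: field_simps)

lemma t3:
  fixes P :: real
  assumes P: "P \<noteq> 0" and n: "n = i + 1 + k"
  shows "(P^(n-i) - P^(n-i-1)) * (P^(n-i) - P^(n-i-1)) * (P^n*(P^n*P^n*P^i - P^n - 1))
       = (P-1)^2 * (P^(3*n - 2*i - 2) * (P^(2*n + i) - P^n - 1))"
  unfolding pw[OF n] using P by (simp add: field_simps power2_eq_square)
lemma tele:
  fixes P :: real
  assumes "1 \<le> i" "i \<le> n"
  shows "(\<Sum>j\<in>{i..n-1}. P^(n-j) - P^(n-j-1)) = P^(n-i) - 1"
  using assms(2)
proof (induction i rule: inc_induct)
  case base
  have "{n..n-1} = {}" using assms by auto
  thus ?case by simp
next
  case (step i)
  have "{i..n-1} = insert i {Suc i..n-1}" using step.hyps by auto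
  hence "(\<Sum>j\<in>{i..n-1}. P^(n-j) - P^(n-j-1)) = (P^(n-i) - P^(n-i-1)) + (P^(n - Suc i) - 1)"
    using step.IH by simp
  also have "n - Suc i = n - i - 1" by simp
  finally show ?case by simp
qed

lemma dbl:
  fixes c H :: "nat \<Rightarrow> real"
  shows "(\<Sum>i\<in>{1..m}. \<Sum>j\<in>{1..m}. c i * c j * H (min i j))
       = 2 * (\<Sum>i\<in>{1..m}. c i * H i * (\<Sum>j\<in>{i..m}. c j)) - (\<Sum>i\<in>{1..m}. c i * c i * H i)"
proof -
  define A where "A = (\<Sum>i\<in>{1..m}. \<Sum>j\<in>{1..m}. if i \<le> j then c i * c j * H i else 0)"
  define B where "B = (\<Sum>i\<in>{1..m}. \<Sum>j\<in>{1..m}. if j < i then c i * c j * H j else 0)"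
  define B' where "B' = (\<Sum>i\<in>{1..m}. \<Sum>j\<in>{1..m}. if i < j then c i * c j * H i else 0)"
  define D where "D = (\<Sum>i\<in>{1..m}. c i * c i * H i)"
  have "(\<Sum>i\<in>{1..m}. \<Sum>j\<in>{1..m}. c i * c j * H (min i j)) = A + B"
    unfolding A_def B_def sum.distrib[symmetric]
    by (intro sum.cong refl) (auto simp: min_def)
  moreover have "B = B'"
    unfolding B_def B'_def by (subst sum.swap) (rule sum.cong[OF refl], rule sum.cong[OF refl], simp add: mult.commute)
  moreover have "A = B' + D"
  proof -
    have "A = (\<Sum>i\<in>{1..m}. \<Sum>j\<in>{1..m}. (if i < j then c i * c j * H i else 0) + (if i = j then c i * c j * H i else 0))"
      unfolding A_def by (intro sum.cong refl) auto
    also have "\<dots> = B' + (\<Sum>i\<in>{1..m}. \<Sum>j\<in>{1..m}. if i = j then c i * c j * H i else 0)"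
      unfolding B'_def sum.distrib by simp
    also have "(\<Sum>i\<in>{1..m}. \<Sum>j\<in>{1..m}. if i = j then c i * c j * H i else 0) = D"
      unfolding D_def by (intro sum.cong refl) (simp add: sum.delta')
    finally show ?thesis .
  qed
  moreover have "A = (\<Sum>i\<in>{1..m}. c i * H i * (\<Sum>j\<in>{i..m}. c j))"
    unfolding A_def
  proof (intro sum.cong refl)
    fix i assume i: "i \<in> {1..m}"
    have "(\<Sum>j\<in>{1..m}. if i \<le> j then c i * c j * H i else 0) = (\<Sum>j\<in>{j\<in>{1..m}. i \<le> j}. c i * c j * H i)"
      by (rule sum.inter_filter[symmetric]) simp
    also have "{j\<in>{1..m}. i \<le> j} = {i..m}" using i by auto
    finally show "(\<Sum>j\<in>{1..m}. if i \<le> j then c i * c j * H i else 0) = c i * H i * (\<Sum>j\<in>{i..m}. c j)"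
      by (simp add: sum_distrib_left mult_ac)
  qed
  ultimately show ?thesis unfolding D_def by simp
qed

lemma gcd_shift:
  fixes x y b N :: int
  assumes "N dvd (x - y)"
  shows "gcd (gcd x b) N = gcd (gcd y b) N"
proof -
  have h: "gcd (gcd x b) N dvd gcd (gcd y b) N" if "N dvd (x - y)" for x y :: int
  proof -
    have "gcd (gcd x b) N dvd (x - y)" using that by (meson dvd_trans gcd_dvd2)
    moreover have "gcd (gcd x b) N dvd x" by (meson dvd_trans gcd_dvd1)
    ultimately have "gcd (gcd x b) N dvd (x - (x - y))" by (metis dvd_diff)
    hence "gcd (gcd x b) N dvd y" by simp
    moreover have "gcd (gcd x b) N dvd b" by (meson dvd_trans gcd_dvd1 gcd_dvd2)
    ultimately show ?thesis by simp
  qed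
  have "N dvd (y - x)" using assms by (metis dvd_minus_iff minus_diff_eq)
  show ?thesis using h[OF assms] h[OF \<open>N dvd (y - x)\<close>] by (simp add: zdvd_antisym_nonneg)
qed

lemma gcd_distr:
  fixes a b N :: int
  shows "gcd (gcd a b) N = gcd (gcd a N) (gcd b N)"
  by (metis gcd.assoc gcd.commute gcd.left_idem)

lemma gcd_pow_min:
  fixes p :: int
  assumes "p > 0"
  shows "gcd (p^a) (p^b) = p^(min a b)"
proof (cases "a \<le> b")
  case True
  hence "p^a dvd p^b" by (simp add: le_imp_power_dvd)
  thus ?thesis using True assms by (simp add: gcd_proj1_if_dvd min_def)
next
  case False
  hence "p^b dvd p^a" by (simp add: le_imp_power_dvd)
  thus ?thesis using False assms by (simp add: gcd_proj2_if_dvd min_def)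
qed

lemma Xr_disj:
  fixes p :: int
  assumes "r \<noteq> s"
  shows "Xr p n r \<inter> Xr p n s = {}"
proof -
  have *: "Xr p n r \<inter> Xr p n s = {}" if "r < s" for r s
  proof -
    have "p^(Suc r) dvd p^s" by (rule le_imp_power_dvd) (use that in simp)
    thus ?thesis by (auto simp: Xr_def intro: dvd_trans)
  qed
  show ?thesis using assms *[of r s] *[of s r] by (cases "r < s") (auto simp: Int_commute)
qed

lemma finite_Xr: "finite (Xr p n r)"
  unfolding Xr_def by (rule finite_subset[OF _ finite_atLeastLessThan_int[of 0 "p^n"]]) auto

lemma sum_X:
  fixes p :: int and F :: "int \<Rightarrow> real"
  assumes p: "prime p"
  shows "(\<Sum>m\<in>{m. 1 \<le> m \<and> m < p^n \<and> p dvd m}. F (gcd m (p^n)))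
       = (\<Sum>r\<in>{1..n-1}. real (card (Xr p n r)) * F (p^r))"
proof -
  have "(\<Sum>m\<in>{m. 1 \<le> m \<and> m < p^n \<and> p dvd m}. F (gcd m (p^n)))
      = (\<Sum>m\<in>(\<Union>r\<in>{1..n-1}. Xr p n r). F (gcd m (p^n)))" using X_union[OF p] by simp
  also have "\<dots> = (\<Sum>r\<in>{1..n-1}. \<Sum>m\<in>Xr p n r. F (gcd m (p^n)))"
    by (rule sum.UNION_disjoint) (auto simp: finite_Xr dest: Xr_disj)
  also have "\<dots> = (\<Sum>r\<in>{1..n-1}. \<Sum>m\<in>Xr p n r. F (p^r))"
  proof (intro sum.cong refl)
    fix r m assume r: "r \<in> {1..n-1}" and m: "m \<in> Xr p n r"
    have "r < n" using r by auto
    thus "F (gcd m (p^n)) = F (p^r)" using gcd_Xr[OF p _ m] by simp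
  qed
  also have "\<dots> = (\<Sum>r\<in>{1..n-1}. real (card (Xr p n r)) * F (p^r))" by simp
  finally show ?thesis .
qed

theorem corollary2p8:
  fixes p :: int and n :: nat
  assumes "prime p" and "n \<ge> 2"
  defines "R \<equiv> residue_ring (p ^ n)"
  defines "T \<equiv> Tr R"
  defines "X \<equiv> nz_zero_divisors R"
  defines "A4 \<equiv> {(m \<oplus>\<^bsub>R\<^esub> z, \<zero>\<^bsub>R\<^esub>, z) | m z. m \<in> X \<and> z \<in> carrier R}"
  defines "A5 \<equiv> {(z, m, z) | m z. m \<in> X \<and> z \<in> carrier R}"
  defines "A6 \<equiv> {(m1 \<oplus>\<^bsub>R\<^esub> z, m2, z) | m1 m2 z. m1 \<in> X \<and> m2 \<in> X \<and> z \<in> carrier R}"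
  defines "dA \<equiv> (\<lambda>A. real (\<Sum>B\<in>A. cg_degree T B))"
  defines "\<alpha> \<equiv> (real_of_int p - 1) * real_of_int p ^ (2*n - 1) *
      (\<Sum>r = 1..n-1. (real_of_int p ^ (3*n) + real_of_int p ^ n + 1) / real_of_int p ^ r
                     - (real_of_int p ^ (2*n) + real_of_int p ^ n) / real_of_int p ^ (2*r)
                     - real_of_int p ^ (2*n))"
  defines "\<beta> \<equiv> (real_of_int p - 1)^2 *
      (\<Sum>r = 1..n-1. real_of_int p ^ (3*n - 2*r - 2) *
                     (real_of_int p ^ (2*n + r) - real_of_int p ^ n - 1))"
  shows "dA A4 = (real_of_int p - 1) * real_of_int p ^ (2*n - 1) *
            (\<Sum>r = 1..n-1. real_of_int p ^ (2*n) - real_of_int p ^ (n - r) - 1 / real_of_int p ^ r)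
       \<and> dA A5 = dA A4
       \<and> dA A6 = 2 * \<alpha> - \<beta>"
proof -
  define N where "N = p^n"
  define P where "P = real_of_int p"
  have p1: "p > 1" using assms(1) by (simp add: prime_gt_1_int)
  have N1: "N > 1" unfolding N_def using p1 assms(2) by (simp add: one_less_power)
  have NP: "real_of_int N = P^n" by (simp add: N_def P_def)
  have P0: "P \<noteq> 0" using p1 by (simp add: P_def)
  have carR: "carrier R = {0..<N}" by (auto simp: R_def N_def residue_ring_def)
  have addR: "\<And>x y. x \<oplus>\<^bsub>R\<^esub> y = (x + y) mod N" by (simp add: R_def N_def residue_ring_def)
  have zeroR: "\<zero>\<^bsub>R\<^esub> = 0" by (simp add: R_def residue_ring_def)
  define XX where "XX = {m. 1 \<le> m \<and> m < N \<and> p dvd m}"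
  have Xeq: "X = XX" unfolding X_def R_def XX_def N_def using X_char[OF assms(1)] assms(2) by simp
  have finX: "finite XX" unfolding XX_def by (rule finite_subset[OF _ finite_atLeastLessThan_int[of 0 N]]) auto
  have TT: "T = Tr (residue_ring N)" by (simp add: T_def R_def N_def)
  define h where "h = (\<lambda>g::real. real_of_int N * (real_of_int N * real_of_int N * g - real_of_int N - 1))"
  define c where "c = (\<lambda>r. real (card (Xr p n r)))"
  have cval: "c r = P^(n-r) - P^(n-r-1)" if "r < n" for r
  proof -
    have "real_of_int (int (card (Xr p n r))) = real_of_int (p^(n-r) - p^(n-r-1))"
      using card_Xr[OF assms(1) that] by simp
    thus ?thesis by (simp add: c_def P_def)
  qed
  have sumX: "(\<Sum>m\<in>XX. F (gcd m N)) = (\<Sum>r\<in>{1..n-1}. c r * F (p^r))" for F :: "int \<Rightarrow> real"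
    unfolding XX_def N_def c_def using sum_X[OF assms(1)] by simp
  have XXr: "1 \<le> m" "m < N" "p dvd m" if "m \<in> XX" for m using that by (auto simp: XX_def)
  have modne: "(m + z) mod N \<noteq> z" if "m \<in> XX" "0 \<le> z" "z < N" for m z
  proof
    assume "(m + z) mod N = z"
    hence "(m + z) mod N = z mod N" using that by simp
    hence "N dvd (m + z - z)" by (simp add: mod_eq_dvd_iff)
    hence "N \<le> m" using XXr[OF that(1)] by (simp add: zdvd_imp_le)
    thus False using XXr[OF that(1)] by simp
  qed
  have shift: "N dvd (((m + z) mod N - z) - m)" for m z
  proof -
    have "((m + z) mod N - z) mod N = m mod N" by (simp add: mod_diff_left_eq)
    thus ?thesis by (simp add: mod_eq_dvd_iff)
  qed
  have cardN: "real (nat N) = real_of_int N" using N1 by simp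
  have A4eq: "A4 = (\<lambda>(m,z). ((m+z) mod N, 0, z)) ` (XX \<times> {0..<N})"
    unfolding A4_def Xeq carR addR zeroR by auto
  have inj4: "inj_on (\<lambda>(m,z). ((m+z) mod N, 0::int, z)) (XX \<times> {0..<N})"
  proof (rule inj_onI, clarsimp)
    fix m z m' assume h: "m \<in> XX" "m' \<in> XX" "(m + z) mod N = (m' + z) mod N"
    hence "N dvd (m + z - (m' + z))" by (simp add: mod_eq_dvd_iff)
    thus "m = m'" using range_dvd_eq[of m N m'] XXr[OF h(1)] XXr[OF h(2)] by simp
  qed
  have deg4: "real (cg_degree T ((m+z) mod N, 0, z)) = real_of_int (N*N*gcd m N - N - 1)"
    if "m \<in> XX" "z \<in> {0..<N}" for m z
  proof -
    have "int (cg_degree T ((m+z) mod N, 0, z)) = N*N*gcd (gcd ((m+z) mod N - z) 0) N - N - 1"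
      unfolding TT using degree[OF N1, of "(m+z) mod N" 0 z] modne[OF that(1)] that N1 by simp
    also have "gcd (gcd ((m+z) mod N - z) 0) N = gcd (gcd m 0) N" by (rule gcd_shift[OF shift])
    finally have "int (cg_degree T ((m+z) mod N, 0, z)) = N*N*gcd m N - N - 1" by simp
    hence "real_of_int (int (cg_degree T ((m+z) mod N, 0, z))) = real_of_int (N*N*gcd m N - N - 1)" by (simp only:)
    thus ?thesis by simp
  qed
  have dA4: "dA A4 = (\<Sum>m\<in>XX. h (real_of_int (gcd m N)))"
  proof -
    have "dA A4 = (\<Sum>B\<in>A4. real (cg_degree T B))" by (simp add: dA_def)
    also have "\<dots> = (\<Sum>x\<in>XX \<times> {0..<N}. real (cg_degree T ((\<lambda>(m,z). ((m+z) mod N, 0, z)) x)))"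
      unfolding A4eq by (rule sum.reindex[OF inj4, unfolded comp_def])
    also have "\<dots> = (\<Sum>(m,z)\<in>XX \<times> {0..<N}. real_of_int (N*N*gcd m N - N - 1))"
      by (intro sum.cong refl) (auto simp: deg4)
    also have "\<dots> = (\<Sum>m\<in>XX. \<Sum>z\<in>{0..<N}. real_of_int (N*N*gcd m N - N - 1))"
      by (rule sum.cartesian_product[symmetric])
    also have "\<dots> = (\<Sum>m\<in>XX. h (real_of_int (gcd m N)))"
      by (intro sum.cong refl) (simp add: h_def cardN)
    finally show ?thesis .
  qed
  have A5eq: "A5 = (\<lambda>(m,z). (z, m, z)) ` (XX \<times> {0..<N})"
    unfolding A5_def Xeq carR by auto
  have inj5: "inj_on (\<lambda>(m,z). (z, m, z::int)) (XX \<times> {0..<N})"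
    by (rule inj_onI) auto
  have deg5: "real (cg_degree T (z, m, z)) = real_of_int (N*N*gcd m N - N - 1)"
    if "m \<in> XX" "z \<in> {0..<N}" for m z
  proof -
    have "int (cg_degree T (z, m, z)) = N*N*gcd (gcd (z - z) m) N - N - 1"
      unfolding TT using degree[OF N1, of z m z] XXr[OF that(1)] that N1 by simp
    also have "gcd (gcd (z - z) m) N = gcd m N" by simp
    finally have "int (cg_degree T (z, m, z)) = N*N*gcd m N - N - 1" by simp
    hence "real_of_int (int (cg_degree T (z, m, z))) = real_of_int (N*N*gcd m N - N - 1)" by (simp only:)
    thus ?thesis by simp
  qed
  have dA5: "dA A5 = (\<Sum>m\<in>XX. h (real_of_int (gcd m N)))"
  proof -
    have "dA A5 = (\<Sum>B\<in>A5. real (cg_degree T B))" by (simp add: dA_def)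
    also have "\<dots> = (\<Sum>x\<in>XX \<times> {0..<N}. real (cg_degree T ((\<lambda>(m,z). (z, m, z)) x)))"
      unfolding A5eq by (rule sum.reindex[OF inj5, unfolded comp_def])
    also have "\<dots> = (\<Sum>(m,z)\<in>XX \<times> {0..<N}. real_of_int (N*N*gcd m N - N - 1))"
      by (intro sum.cong refl) (auto simp: deg5)
    also have "\<dots> = (\<Sum>m\<in>XX. \<Sum>z\<in>{0..<N}. real_of_int (N*N*gcd m N - N - 1))"
      by (rule sum.cartesian_product[symmetric])
    also have "\<dots> = (\<Sum>m\<in>XX. h (real_of_int (gcd m N)))"
      by (intro sum.cong refl) (simp add: h_def cardN)
    finally show ?thesis .
  qed
  have A6eq: "A6 = (\<lambda>((m1,m2),z). ((m1+z) mod N, m2, z)) ` ((XX \<times> XX) \<times> {0..<N})"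
    unfolding A6_def Xeq carR addR
    by (auto intro!: image_eqI[of _ "\<lambda>((m1,m2),z). ((m1+z) mod N, m2, z)" "((m1,m2),z)" for m1 m2 z])
  have inj6: "inj_on (\<lambda>((m1,m2),z). ((m1+z) mod N, m2, z)) ((XX \<times> XX) \<times> {0..<N})"
  proof (rule inj_onI, clarsimp)
    fix m z m' m2 assume h: "m \<in> XX" "m' \<in> XX" "(m + z) mod N = (m' + z) mod N"
    hence "N dvd (m + z - (m' + z))" by (simp add: mod_eq_dvd_iff)
    thus "m = m'" using range_dvd_eq[of m N m'] XXr[OF h(1)] XXr[OF h(2)] by simp
  qed
  have deg6: "real (cg_degree T ((m1+z) mod N, m2, z)) = real_of_int (N*N*gcd (gcd m1 m2) N - N - 1)"
    if "m1 \<in> XX" "m2 \<in> XX" "z \<in> {0..<N}" for m1 m2 z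
  proof -
    have "int (cg_degree T ((m1+z) mod N, m2, z)) = N*N*gcd (gcd ((m1+z) mod N - z) m2) N - N - 1"
      unfolding TT using degree[OF N1, of "(m1+z) mod N" m2 z] XXr[OF that(2)] that N1 by simp
    also have "gcd (gcd ((m1+z) mod N - z) m2) N = gcd (gcd m1 m2) N" by (rule gcd_shift[OF shift])
    finally have "int (cg_degree T ((m1+z) mod N, m2, z)) = N*N*gcd (gcd m1 m2) N - N - 1" .
    hence "real_of_int (int (cg_degree T ((m1+z) mod N, m2, z))) = real_of_int (N*N*gcd (gcd m1 m2) N - N - 1)" by (simp only:)
    thus ?thesis by simp
  qed
  have dA6: "dA A6 = (\<Sum>m1\<in>XX. \<Sum>m2\<in>XX. h (real_of_int (gcd (gcd m1 m2) N)))"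
  proof -
    have "dA A6 = (\<Sum>B\<in>A6. real (cg_degree T B))" by (simp add: dA_def)
    also have "\<dots> = (\<Sum>x\<in>(XX \<times> XX) \<times> {0..<N}. real (cg_degree T ((\<lambda>((m1,m2),z). ((m1+z) mod N, m2, z)) x)))"
      unfolding A6eq by (rule sum.reindex[OF inj6, unfolded comp_def])
    also have "\<dots> = (\<Sum>(mm,z)\<in>(XX \<times> XX) \<times> {0..<N}. real_of_int (N*N*gcd (gcd (fst mm) (snd mm)) N - N - 1))"
      by (intro sum.cong refl) (auto simp: deg6)
    also have "\<dots> = (\<Sum>mm\<in>XX \<times> XX. \<Sum>z\<in>{0..<N}. real_of_int (N*N*gcd (gcd (fst mm) (snd mm)) N - N - 1))"
      by (rule sum.cartesian_product[symmetric])
    also have "\<dots> = (\<Sum>mm\<in>XX \<times> XX. h (real_of_int (gcd (gcd (fst mm) (snd mm)) N)))"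
      by (intro sum.cong refl) (simp add: h_def cardN)
    also have "\<dots> = (\<Sum>m1\<in>XX. \<Sum>m2\<in>XX. h (real_of_int (gcd (gcd m1 m2) N)))"
      by (simp add: sum.cartesian_product split_beta)
    finally show ?thesis .
  qed
  define H where "H = (\<lambda>r. h (real_of_int (p^r)))"
  have Hval: "H r = P^n*(P^n*P^n*P^r - P^n - 1)" for r
    by (simp add: H_def h_def NP P_def)
  have nk: "n = i + 1 + (n - i - 1)" if "i \<in> {1..n-1}" for i using that by auto
  have rlt: "r < n" if "r \<in> {1..n-1}" for r using that by auto
  have S1: "(\<Sum>m\<in>XX. h (real_of_int (gcd m N))) = (\<Sum>r\<in>{1..n-1}. c r * H r)"
    using sumX[of "\<lambda>g. h (real_of_int g)"] by (simp add: H_def)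
  also have "\<dots> = (\<Sum>r\<in>{1..n-1}. (P-1)*P^(2*n-1)*(P^(2*n) - P^(n-r) - 1/P^r))"
  proof (intro sum.cong refl)
    fix r assume r: "r \<in> {1..n-1}"
    show "c r * H r = (P-1)*P^(2*n-1)*(P^(2*n) - P^(n-r) - 1/P^r)"
      unfolding cval[OF rlt[OF r]] Hval by (rule t1[OF P0 nk[OF r]])
  qed
  also have "\<dots> = (P-1)*P^(2*n-1)*(\<Sum>r\<in>{1..n-1}. P^(2*n) - P^(n-r) - 1/P^r)"
    by (simp add: sum_distrib_left)
  finally have part1: "dA A4 = (P-1)*P^(2*n-1)*(\<Sum>r\<in>{1..n-1}. P^(2*n) - P^(n-r) - 1/P^r)"
    using dA4 by simp
  have part2: "dA A5 = dA A4" using dA4 dA5 by simp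
  have "dA A6 = (\<Sum>m1\<in>XX. \<Sum>m2\<in>XX. h (real_of_int (gcd (gcd m1 N) (gcd m2 N))))"
    using dA6 by (simp add: gcd_distr)
  also have "\<dots> = (\<Sum>m1\<in>XX. \<Sum>r2\<in>{1..n-1}. c r2 * h (real_of_int (gcd (gcd m1 N) (p^r2))))"
    by (intro sum.cong refl) (rule sumX)
  also have "\<dots> = (\<Sum>r2\<in>{1..n-1}. c r2 * (\<Sum>m1\<in>XX. h (real_of_int (gcd (gcd m1 N) (p^r2)))))"
    by (subst sum.swap) (simp add: sum_distrib_left)
  also have "\<dots> = (\<Sum>r2\<in>{1..n-1}. c r2 * (\<Sum>r1\<in>{1..n-1}. c r1 * h (real_of_int (gcd (p^r1) (p^r2)))))"
    by (intro sum.cong refl arg_cong2[where f="(*)"]) (rule sumX)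
  also have "\<dots> = (\<Sum>i\<in>{1..n-1}. \<Sum>j\<in>{1..n-1}. c i * c j * H (min i j))"
    using p1 by (simp add: sum_distrib_left gcd_pow_min H_def mult_ac min.commute)
  also have "\<dots> = 2 * (\<Sum>i\<in>{1..n-1}. c i * H i * (\<Sum>j\<in>{i..n-1}. c j)) - (\<Sum>i\<in>{1..n-1}. c i * c i * H i)"
    by (rule dbl)
  also have "(\<Sum>i\<in>{1..n-1}. c i * H i * (\<Sum>j\<in>{i..n-1}. c j))
      = (\<Sum>i\<in>{1..n-1}. (P-1)*P^(2*n-1)*((P^(3*n) + P^n + 1) / P^i - (P^(2*n) + P^n) / P^(2*i) - P^(2*n)))"
  proof (intro sum.cong refl)
    fix i assume i: "i \<in> {1..n-1}"
    have "(\<Sum>j\<in>{i..n-1}. c j) = (\<Sum>j\<in>{i..n-1}. P^(n-j) - P^(n-j-1))"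
      by (intro sum.cong refl cval) (use i in auto)
    also have "\<dots> = P^(n-i) - 1" by (rule tele) (use i in auto)
    finally show "c i * H i * (\<Sum>j\<in>{i..n-1}. c j) = (P-1)*P^(2*n-1)*((P^(3*n) + P^n + 1) / P^i - (P^(2*n) + P^n) / P^(2*i) - P^(2*n))"
      unfolding cval[OF rlt[OF i]] Hval by (simp only:) (rule t2[OF P0 nk[OF i]])
  qed
  also have "\<dots> = (P-1)*P^(2*n-1)*(\<Sum>i\<in>{1..n-1}. (P^(3*n) + P^n + 1) / P^i - (P^(2*n) + P^n) / P^(2*i) - P^(2*n))"
    by (simp add: sum_distrib_left)
  also have "(\<Sum>i\<in>{1..n-1}. c i * c i * H i) = (\<Sum>i\<in>{1..n-1}. (P-1)^2 * (P^(3*n - 2*i - 2) * (P^(2*n + i) - P^n - 1)))"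
  proof (intro sum.cong refl)
    fix i assume i: "i \<in> {1..n-1}"
    show "c i * c i * H i = (P-1)^2 * (P^(3*n - 2*i - 2) * (P^(2*n + i) - P^n - 1))"
      unfolding cval[OF rlt[OF i]] Hval by (rule t3[OF P0 nk[OF i]])
  qed
  also have "\<dots> = (P-1)^2 * (\<Sum>i\<in>{1..n-1}. P^(3*n - 2*i - 2) * (P^(2*n + i) - P^n - 1))"
    by (simp add: sum_distrib_left)
  finally have part3: "dA A6 = 2 * ((P-1)*P^(2*n-1)*(\<Sum>i\<in>{1..n-1}. (P^(3*n) + P^n + 1) / P^i - (P^(2*n) + P^n) / P^(2*i) - P^(2*n)))
      - (P-1)^2 * (\<Sum>i\<in>{1..n-1}. P^(3*n - 2*i - 2) * (P^(2*n + i) - P^n - 1))" .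
  show ?thesis using part1 part2 part3 unfolding \<alpha>_def \<beta>_def P_def by simp
qed

end
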